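(* There is no binary self-orthogonal $[118,7,58]$ code.
   Context: A binary linear code $C$ is self-orthogonal if $C\subseteq C^\perp$. *)

theory Defs
  imports Main
begin

text \<open>Binary words of length n are represented as bool lists of length n
  (True = 1, False = 0); addition in GF(2)^n is componentwise xor.\<close>

definition vadd :: "bool list \<Rightarrow> bool list \<Rightarrow> bool list" where
  "vadd x y = map2 (\<noteq>) x y"

definition hamming_dist :: "bool list \<Rightarrow> bool list \<Rightarrow> nat" where
  "hamming_dist x y = length (filter id (map2 (\<noteq>) x y))"

definition orth :: "bool list \<Rightarrow> bool list \<Rightarrow> bool" where
  "orth x y \<longleftrightarrow> even (length (filter id (map2 (\<and>) x y)))"

text \<open>A binary linear code of length n: a subspace of GF(2)^n
  (over GF(2): contains 0 and is closed under addition).\<close>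
definition binary_linear_code :: "nat \<Rightarrow> bool list set \<Rightarrow> bool" where
  "binary_linear_code n C \<longleftrightarrow>
     C \<subseteq> {x. length x = n} \<and> replicate n False \<in> C \<and> (\<forall>x\<in>C. \<forall>y\<in>C. vadd x y \<in> C)"

definition code_dim :: "bool list set \<Rightarrow> nat \<Rightarrow> bool" where
  "code_dim C k \<longleftrightarrow> card C = 2 ^ k"

definition min_distance :: "bool list set \<Rightarrow> nat" where
  "min_distance C = Min {hamming_dist x y | x y. x \<in> C \<and> y \<in> C \<and> x \<noteq> y}"

definition dual_code :: "nat \<Rightarrow> bool list set \<Rightarrow> bool list set" where
  "dual_code n C = {y. length y = n \<and> (\<forall>x\<in>C. orth x y)}"

definition self_orthogonal :: "nat \<Rightarrow> bool list set \<Rightarrow> bool" where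
  "self_orthogonal n C \<longleftrightarrow> C \<subseteq> dual_code n C"

definition is_nkd_code :: "nat \<Rightarrow> nat \<Rightarrow> nat \<Rightarrow> bool list set \<Rightarrow> bool" where
  "is_nkd_code n k d C \<longleftrightarrow> binary_linear_code n C \<and> code_dim C k \<and> min_distance C = d"

end

theory Submission
  imports Defs
begin

definition wt :: "bool list \<Rightarrow> nat" where
  "wt x = length (filter id x)"

lemma wt_add:
  "length x = length y \<Longrightarrow>
   wt (vadd x y) + 2 * length (filter id (map2 (\<and>) x y)) = wt x + wt y"
  unfolding wt_def vadd_def by (induction x y rule: list_induct2) auto

lemma vadd_invol: "length x = length y \<Longrightarrow> vadd x (vadd x y) = y"
  unfolding vadd_def by (induction x y rule: list_induct2) auto

lemma vadd_length: "length x = length y \<Longrightarrow> length (vadd x y) = length y"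
  unfolding vadd_def by simp

lemma vadd_nth: "length x = length y \<Longrightarrow> i < length y \<Longrightarrow> vadd x y ! i = (x ! i \<noteq> y ! i)"
  unfolding vadd_def by simp

lemma map2_and_self: "map2 (\<and>) x x = x"
  by (induction x) auto

lemma map2_zero: "map2 (\<noteq>) x (replicate (length x) False) = x"
  by (induction x) auto

lemma coord_count:
  assumes fin: "finite D" and sub: "D \<subseteq> {x. length x = n}"
    and cl: "\<forall>x\<in>D. \<forall>y\<in>D. vadd x y \<in> D" and i: "i < n"
  shows "2 * card {x\<in>D. x ! i} \<le> card D"
proof -
  let ?A = "{x\<in>D. x ! i}" and ?B = "{x\<in>D. \<not> x ! i}"
  have AB: "card D = card ?A + card ?B"
  proof -
    have "D = ?A \<union> ?B" by auto
    moreover have "?A \<inter> ?B = {}" by auto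
    moreover have "finite ?A" "finite ?B" using fin by auto
    ultimately show ?thesis using card_Un_disjoint[of ?A ?B] by simp
  qed
  have "card ?A \<le> card ?B"
  proof (cases "?A = {}")
    case True
    have "card ?A = 0" by (subst True) (rule card.empty)
    then show ?thesis by (rule ssubst) (rule zero_le)
  next
    case False
    then obtain x0 where x0: "x0 \<in> D" "x0 ! i" by auto
    have "inj_on (vadd x0) ?A"
    proof (rule inj_onI)
      fix a b assume a: "a \<in> ?A" and b: "b \<in> ?A" and e: "vadd x0 a = vadd x0 b"
      have "vadd x0 (vadd x0 a) = vadd x0 (vadd x0 b)" using e by simp
      moreover have "length x0 = length a" "length x0 = length b" using a b x0 sub by auto
      ultimately show "a = b" using vadd_invol[of x0 a] vadd_invol[of x0 b] by simp
    qed
    moreover have "vadd x0 ` ?A \<subseteq> ?B"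
    proof
      fix z assume "z \<in> vadd x0 ` ?A"
      then obtain a where a: "a \<in> ?A" and z: "z = vadd x0 a" by auto
      have la: "length a = n" "length x0 = n" using a x0 sub by auto
      have "z \<in> D" using cl a x0 z by auto
      moreover have "\<not> z ! i" using z vadd_nth[of x0 a i] la i a x0 by auto
      ultimately show "z \<in> ?B" by simp
    qed
    moreover have "finite ?B" using fin by simp
    ultimately show ?thesis by (rule card_inj_on_le)
  qed
  then show ?thesis using AB by simp
qed

lemma sum_wt:
  assumes fin: "finite D" and sub: "D \<subseteq> {x. length x = n}"
    and cl: "\<forall>x\<in>D. \<forall>y\<in>D. vadd x y \<in> D"
  shows "2 * (\<Sum>x\<in>D. wt x) \<le> n * card D"
proof -
  have "(\<Sum>x\<in>D. wt x) = (\<Sum>x\<in>D. \<Sum>i<n. if x ! i then 1 else 0)"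
  proof (rule sum.cong)
    fix x assume "x \<in> D"
    then have lx: "length x = n" using sub by auto
    have "wt x = card {i. i < n \<and> x ! i}" unfolding wt_def using lx
      by (simp add: length_filter_conv_card)
    also have "\<dots> = (\<Sum>i<n. if x ! i then 1 else 0)"
      by (simp add: sum.If_cases lessThan_def Collect_conj_eq Int_commute)
    finally show "wt x = (\<Sum>i<n. if x ! i then 1 else 0)" .
  qed simp
  also have "\<dots> = (\<Sum>i<n. \<Sum>x\<in>D. if x ! i then 1 else 0)" by (rule sum.swap)
  also have "\<dots> = (\<Sum>i<n. card {x\<in>D. x ! i})"
    using fin by (simp add: sum.If_cases Int_def)
  finally have "2 * (\<Sum>x\<in>D. wt x) = (\<Sum>i<n. 2 * card {x\<in>D. x ! i})"
    by (simp add: sum_distrib_left)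
  also have "\<dots> \<le> (\<Sum>i<n. card D)"
    by (rule sum_mono) (use coord_count[OF fin sub cl] in auto)
  finally show ?thesis by simp
qed

lemma mod4_step: "(d::nat) \<le> w \<Longrightarrow> w mod 4 = 0 \<Longrightarrow> d mod 4 = 2 \<Longrightarrow> d + 2 \<le> w"
proof -
  assume a: "d \<le> w" "w mod 4 = 0" "d mod 4 = 2"
  have w: "w = 4 * (w div 4)" using a(2) div_mult_mod_eq[of w 4] by simp
  have d: "d = 4 * (d div 4) + 2" using a(3) div_mult_mod_eq[of d 4] by simp
  have "d div 4 < w div 4" using a(1) w d by linarith
  then show ?thesis using w d by linarith
qed

lemma mod4_two: "even (w::nat) \<Longrightarrow> w mod 4 \<noteq> 0 \<Longrightarrow> w mod 4 = 2"
proof -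
  assume a: "even w" "w mod 4 \<noteq> 0"
  obtain m where m: "w = 2 * m" using a(1) by blast
  have "odd m" using a(2) m by auto
  then obtain j where "m = 2 * j + 1" using oddE by blast
  then have "w = 2 + j * 4" using m by simp
  then show ?thesis by (simp only: mod_mult_self1) simp
qed

lemma mod4_sum: "(a::nat) mod 4 = 2 \<Longrightarrow> b mod 4 = 2 \<Longrightarrow> (a + b) mod 4 = 0"
proof -
  assume h: "a mod 4 = 2" "b mod 4 = 2"
  have "(a + b) mod 4 = (a mod 4 + b mod 4) mod 4" by (simp add: mod_add_eq)
  then show ?thesis using h by simp
qed

lemma main:
  assumes lin: "binary_linear_code n C" and fin: "finite C"
    and md: "min_distance C = d" and d2: "d mod 4 = 2"
    and so: "self_orthogonal n C"
  shows "\<exists>k. card C \<le> 2 * k \<and> 2 * (d + 2) * (k - 1) \<le> n * k"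
proof -
  have sub: "C \<subseteq> {x. length x = n}" and z: "replicate n False \<in> C"
    and cl: "\<forall>x\<in>C. \<forall>y\<in>C. vadd x y \<in> C"
    using lin unfolding binary_linear_code_def by auto
  have orthC: "\<And>x y. x \<in> C \<Longrightarrow> y \<in> C \<Longrightarrow> even (length (filter id (map2 (\<and>) x y)))"
    using so unfolding self_orthogonal_def dual_code_def orth_def by blast
  have evenwt: "\<And>x. x \<in> C \<Longrightarrow> even (wt x)"
  proof -
    fix x assume "x \<in> C"
    then show "even (wt x)" using orthC[of x x] map2_and_self[of x] unfolding wt_def by simp
  qed
  have wt4: "\<And>x y. x \<in> C \<Longrightarrow> y \<in> C \<Longrightarrow> wt (vadd x y) mod 4 = (wt x + wt y) mod 4"
  proof -
    fix x y assume x: "x \<in> C" and y: "y \<in> C"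
    have l1: "length x = n" using x sub by (simp add: subset_iff)
    have l2: "length y = n" using y sub by (simp add: subset_iff)
    have l: "length x = length y" using l1 l2 by simp
    obtain m where m: "length (filter id (map2 (\<and>) x y)) = 2 * m" using orthC[OF x y] by auto
    have "wt (vadd x y) + 4 * m = wt x + wt y" using wt_add[OF l] m by simp
    then have "(wt x + wt y) mod 4 = (wt (vadd x y) + 4 * m) mod 4" by simp
    then show "wt (vadd x y) mod 4 = (wt x + wt y) mod 4" by simp
  qed
  define D where "D = {x\<in>C. wt x mod 4 = 0}"
  have finD: "finite D" using fin unfolding D_def by simp
  have subD: "D \<subseteq> {x. length x = n}" using sub unfolding D_def by auto
  have clD: "\<forall>x\<in>D. \<forall>y\<in>D. vadd x y \<in> D"
  proof (intro ballI)
    fix x y assume "x \<in> D" "y \<in> D"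
    then show "vadd x y \<in> D" using wt4[of x y] cl unfolding D_def by auto
  qed
  have wt0: "wt (replicate n False) = 0" unfolding wt_def by simp
  have zD: "replicate n False \<in> D" using z wt0 unfolding D_def by simp
  have cardC: "card C \<le> 2 * card D"
  proof (cases "C - D = {}")
    case True
    then have "C = D" unfolding D_def by auto
    then show ?thesis by simp
  next
    case False
    then obtain x0 where x0: "x0 \<in> C" "x0 \<notin> D" by auto
    have x0n: "wt x0 mod 4 \<noteq> 0" using x0 unfolding D_def by simp
    have x0e: "even (wt x0)" using evenwt[OF x0(1)] .
    have x02: "wt x0 mod 4 = 2" using mod4_two[OF x0e x0n] .
    have "inj_on (vadd x0) (C - D)"
    proof (rule inj_onI)
      fix a b assume a: "a \<in> C - D" and b: "b \<in> C - D" and e: "vadd x0 a = vadd x0 b"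
      have "vadd x0 (vadd x0 a) = vadd x0 (vadd x0 b)" using e by simp
      moreover have "length x0 = length a" "length x0 = length b" using a b x0 sub by auto
      ultimately show "a = b" using vadd_invol[of x0 a] vadd_invol[of x0 b] by simp
    qed
    moreover have "vadd x0 ` (C - D) \<subseteq> D"
    proof
      fix w assume "w \<in> vadd x0 ` (C - D)"
      then obtain a where a: "a \<in> C - D" and w: "w = vadd x0 a" by auto
      have an: "wt a mod 4 \<noteq> 0" using a unfolding D_def by simp
      have ae: "even (wt a)" using a evenwt[of a] by simp
      have a2: "wt a mod 4 = 2" using mod4_two[OF ae an] .
      have "wt w mod 4 = (wt x0 + wt a) mod 4" using wt4[of x0 a] a x0 w by simp
      then have "wt w mod 4 = 0" using mod4_sum[OF x02 a2] by simp
      then show "w \<in> D" using cl a x0 w unfolding D_def by auto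
    qed
    ultimately have "card (C - D) \<le> card D" using finD by (rule card_inj_on_le)
    moreover have "card C = card D + card (C - D)"
    proof -
      have "D \<subseteq> C" unfolding D_def by auto
      then show ?thesis using card_Diff_subset[OF finD] card_mono[OF fin] by simp
    qed
    ultimately show ?thesis by simp
  qed
  have big: "\<And>x. x \<in> D - {replicate n False} \<Longrightarrow> d + 2 \<le> wt x"
  proof -
    fix x assume x: "x \<in> D - {replicate n False}"
    have xC: "x \<in> C" and lx: "length x = n" using x sub unfolding D_def by auto
    let ?S = "{hamming_dist x y |x y. x \<in> C \<and> y \<in> C \<and> x \<noteq> y}"
    have "?S \<subseteq> (\<lambda>(x, y). hamming_dist x y) ` (C \<times> C)" by auto
    then have finS: "finite ?S" by (rule finite_subset) (use fin in simp)
    have "hamming_dist x (replicate n False) \<in> ?S" using xC z x by blast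
    then have "min_distance C \<le> hamming_dist x (replicate n False)"
      unfolding min_distance_def using finS by simp
    moreover have "hamming_dist x (replicate n False) = wt x"
      unfolding hamming_dist_def wt_def using map2_zero[of x] lx by simp
    ultimately have "d \<le> wt x" using md by simp
    moreover have "wt x mod 4 = 0" using x unfolding D_def by simp
    ultimately show "d + 2 \<le> wt x" by (rule mod4_step[OF _ _ d2])
  qed
  have s1: "(\<Sum>x\<in>D. wt x) = wt (replicate n False) + (\<Sum>x\<in>D - {replicate n False}. wt x)"
    by (rule sum.remove[OF finD zD])
  have s2: "(\<Sum>x\<in>D - {replicate n False}. d + 2) \<le> (\<Sum>x\<in>D - {replicate n False}. wt x)"
    by (rule sum_mono) (rule big)
  have s3: "(\<Sum>x\<in>D - {replicate n False}. d + 2) = (d + 2) * (card D - 1)"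
    using finD zD by simp
  have w0: "wt (replicate n False) = 0" unfolding wt_def by simp
  have lo: "(d + 2) * (card D - 1) \<le> (\<Sum>x\<in>D. wt x)" using s1 s2 s3 w0 by linarith
  have up: "2 * (\<Sum>x\<in>D. wt x) \<le> n * card D" by (rule sum_wt[OF finD subD clD])
  show ?thesis
  proof (intro exI conjI)
    show "card C \<le> 2 * card D" by (rule cardC)
    have "2 * ((d + 2) * (card D - 1)) \<le> n * card D" using lo up by linarith
    then show "2 * (d + 2) * (card D - 1) \<le> n * card D" by (simp add: mult.assoc)
  qed
qed

theorem proposition6p4:
  "\<not> (\<exists>C. is_nkd_code 118 7 58 C \<and> self_orthogonal 118 C)"
proof
  assume "\<exists>C. is_nkd_code 118 7 58 C \<and> self_orthogonal 118 C"
  then obtain C where lin: "binary_linear_code 118 C" and dim: "card C = 2 ^ 7"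
    and md: "min_distance C = 58" and so: "self_orthogonal 118 C"
    unfolding is_nkd_code_def code_dim_def by blast
  have c: "card C = 128" using dim by simp
  then have fin: "finite C" using card.infinite[of C] by auto
  obtain k where k1: "card C \<le> 2 * k" and k2: "2 * (58 + 2) * (k - 1) \<le> 118 * k"
    using main[OF lin fin md _ so] by auto
  have k64: "64 \<le> k" using k1 c by simp
  define j where "j = k - 1"
  have kj: "k = j + 1" using k64 unfolding j_def by simp
  have "120 * j \<le> 118 * (j + 1)" using k2 unfolding j_def[symmetric] kj by simp
  then show False using k64 kj by simp
qed

end
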